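(* Assume (A1), (A3), (A4), and the following weakening of (A2): (A2') $f_1,\dots,f_T:\mathbb{R}^d\to\mathbb{R}$ are convex and differentiable, and there is $G_f>0$ with $\|\nabla f_t(x)\|\le G_f$ for all $x\in\mathcal{X}$ and all $t\in[T]$. Suppose $g(x_1)\le-\alpha$ for some $\alpha\in(0,\epsilon]$. Run the Algorithm with $\rho=\alpha/\sqrt{T}$ and $\eta=\frac{\xi\rho}{G_fG_g}$. Then $$\mathrm{Reg}_T\le\Big(\frac{2G_fG_gR^2}{\xi\alpha}+\frac{G_f\xi\alpha}{2G_g}+\frac{G_f\alpha}{\sigma}\Big)\sqrt{T},$$ and $g(x_t)\le0$ for all $t\in[T]$.
   Context: Let $d,T$ be positive integers and $[T]=\{1,\dots,T\}$. Write $\|\cdot\|$ for the Euclidean norm and $\mathbb{B}=\{x\in\mathbb{R}^d:\|x\|\le1\}$. For a closed convex set $\mathcal{Y}$, $\Pi_{\mathcal{Y}}$ is the Euclidean projection onto $\mathcal{Y}$. For $a\in\mathbb{R}$, $[a]_+=\max(a,0)$. Let $g:\mathbb{R}^d\to\mathbb{R}$ be convex with subdifferential $\partial g(x)$, and set $\mathcal{X}=\{x:g(x)\le0\}$. Assumptions: (A1) there is $R>0$ with $\mathcal{X}\subseteq R\mathbb{B}$; (A3) there is $G_g>0$ with $\|s\|\le G_g$ for all $s\in\partial g(x)$ and all $x\in R\mathbb{B}$; (A4) there are $\sigma,\epsilon>0$ such that $\mathcal{X}'=\{x:g(x)=-\epsilon\}$ is nonempty and $\|s\|\ge\sigma$ for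 all $s\in\partial g(x)$ and all $x\in\mathcal{X}'$. Algorithm (OGD with Polyak feasibility steps). Inputs are $x_1\in\mathbb{R}^d$, $\eta>0$ and $\rho\ge0$. For $t=1,\dots,T$: - play $x_t$ and then receive $f_t$; the functions may be chosen adversarially and may depend on past actions; - query $g_t=g(x_t)$ and some $s_t\in\partial g(x_t)$; - set $y_t=x_t-\eta\nabla f_t(x_t)$; - if $s_t\ne0$, set $x_{t+1}=\Pi_{R\mathbb{B}}\big(y_t-\frac{[g_t+s_t^\top(y_t-x_t)+\rho]_+}{\|s_t\|^2}s_t\big)$; if $s_t=0$, set $x_{t+1}=\Pi_{R\mathbb{B}}(y_t)$. Regret is $\mathrm{Reg}_T=\sum_{t=1}^Tf_t(x_t)-\min_{x\in\mathcal{X}}\sum_{t=1}^Tf_t(x)$. Also $\gamma=1-\sigma^2/G_g^2$ and $\xi=1-\sqrt{\gamma}$. *)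

theory Defs
  imports "HOL-Analysis.Analysis"
begin

definition subdiff :: "('a::real_inner \<Rightarrow> real) \<Rightarrow> 'a \<Rightarrow> 'a set" where
  "subdiff g x = {s. \<forall>y. g y \<ge> g x + inner s (y - x)}"

definition pos_part :: "real \<Rightarrow> real" where
  "pos_part a = max a 0"

definition ogd_polyak_step ::
  "real \<Rightarrow> real \<Rightarrow> real \<Rightarrow> ('a::euclidean_space \<Rightarrow> real) \<Rightarrow> 'a \<Rightarrow> 'a \<Rightarrow> 'a \<Rightarrow> 'a" where
  "ogd_polyak_step R eta rho g xt gradft st =
     (let y = xt - eta *\<^sub>R gradft in
      if st \<noteq> 0
      then closest_point (cball 0 R)
             (y - (pos_part (g xt + inner st (y - xt) + rho) / (norm st)\<^sup>2) *\<^sub>R st)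
      else closest_point (cball 0 R) y)"

definition regret :: "nat \<Rightarrow> (nat \<Rightarrow> 'a \<Rightarrow> real) \<Rightarrow> (nat \<Rightarrow> 'a) \<Rightarrow> 'a set \<Rightarrow> real" where
  "regret T f x X = (\<Sum>t=1..T. f t (x t)) - (INF u\<in>X. \<Sum>t=1..T. f t u)"

end

theory Submission
  imports Defs
begin


lemma sublevel_convex:
  fixes g :: "'a::euclidean_space \<Rightarrow> real"
  assumes "convex_on UNIV g"
  shows "convex {w. g w \<le> c}"
proof (rule convexI)
  fix x y :: 'a and u v :: real
  assume "x \<in> {w. g w \<le> c}" "y \<in> {w. g w \<le> c}" "0 \<le> u" "0 \<le> v" "u + v = 1"
  then show "u *\<^sub>R x + v *\<^sub>R y \<in> {w. g w \<le> c}"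
    using convex_lower[OF assms, of x y u v] by auto
qed

lemma key_ratio:
  fixes G1 G2 a1 a2 :: real
  assumes "a1 < 0" "a2 > 0" "a2 * G1 - a1 * G2 \<ge> 0"
  shows "G1 / a1 \<le> G2 / a2"
proof -
  have "G1 / a1 - G2 / a2 = (a2 * G1 - a1 * G2) / (a1 * a2)"
    using assms by (simp add: field_simps)
  moreover have "a1 * a2 < 0" using assms by (simp add: mult_neg_pos)
  ultimately have "G1 / a1 - G2 / a2 \<le> 0" using assms(3)
    by (simp add: divide_nonneg_neg)
  then show ?thesis by simp
qed

lemma subgrad_exists_level:
  fixes g :: "'a::euclidean_space \<Rightarrow> real"
  assumes cvx: "convex_on UNIV g"
    and w0: "g w0 < c" and gx: "g x > c"
  shows "\<exists>p v. g p = c \<and> v \<in> subdiff g p \<and> g x \<ge> c + norm v * norm (x - p)"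
proof -
  have cont: "continuous_on UNIV g" using convex_on_continuous[OF open_UNIV cvx] .
  define L where "L = {w. g w \<le> c}"
  have clL: "closed L" unfolding L_def
    using closed_Collect_le[OF cont continuous_on_const] by simp
  have cvL: "convex L" unfolding L_def using sublevel_convex[OF cvx] .
  have neL: "L \<noteq> {}" unfolding L_def using w0 less_imp_le by blast
  define p where "p = closest_point L x"
  have pL: "p \<in> L" unfolding p_def using closest_point_in_set[OF clL neL] .
  define d where "d = x - p"
  have V: "\<And>w. w \<in> L \<Longrightarrow> inner d (w - p) \<le> 0"
    unfolding d_def p_def using closest_point_dot[OF cvL clL] by blast
  have dnz: "d \<noteq> 0" using pL gx unfolding d_def L_def by auto
  have H: "g w \<ge> c" if "inner d (w - p) \<ge> 0" for w
  proof (rule ccontr)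
    assume "\<not> g w \<ge> c"
    hence "g w < c" by simp
    have "isCont g w" using cont continuous_on_eq_continuous_at by blast
    then obtain \<delta> where \<delta>: "\<delta> > 0" "\<And>w'. dist w' w < \<delta> \<Longrightarrow> dist (g w') (g w) < c - g w"
      using \<open>g w < c\<close> unfolding continuous_at_eps_delta by (metis diff_gt_0_iff_gt)
    define t where "t = \<delta> / (2 * norm d)"
    have tpos: "t > 0" using \<delta> dnz unfolding t_def by simp
    have "dist (w + t *\<^sub>R d) w = t * norm d" using tpos by (simp add: dist_norm)
    also have "\<dots> = \<delta> / 2" using dnz unfolding t_def by simp
    finally have "dist (w + t *\<^sub>R d) w < \<delta>" using \<delta> by simp
    hence "g (w + t *\<^sub>R d) < c" using \<delta>(2) by (simp add: dist_real_def abs_less_iff)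
    hence "inner d (w + t *\<^sub>R d - p) \<le> 0" using V L_def by auto
    moreover have "inner d (w + t *\<^sub>R d - p) = inner d (w - p) + t * inner d d"
      by (simp add: inner_diff_right inner_add_right algebra_simps)
    moreover have "inner d d > 0" using dnz by simp
    ultimately show False using that tpos by (smt (verit) mult_pos_pos)
  qed
  have gp: "g p = c" using H[of p] pL L_def by auto
  define a where "a = (\<lambda>w. inner d (w - p))"
  have a0: "a w0 < 0" using H[of w0] w0 unfolding a_def by force
  have ax: "a x = inner d d" unfolding a_def d_def by simp
  have axpos: "a x > 0" using ax dnz by simp
  define S where "S = {(g w - c) / a w | w. a w > 0}"
  define \<mu> where "\<mu> = Inf S"
  have K: "(g w1 - c) / a w1 \<le> (g w2 - c) / a w2" if "a w1 < 0" "a w2 > 0" for w1 w2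
  proof -
    define l where "l = a w2 / (a w2 - a w1)"
    have l01: "0 \<le> l" "l \<le> 1" using that unfolding l_def by (auto simp: field_simps)
    define w where "w = (1 - l) *\<^sub>R w2 + l *\<^sub>R w1"
    have "a w = (1 - l) * a w2 + l * a w1"
    proof -
      have "w - p = (1 - l) *\<^sub>R (w2 - p) + l *\<^sub>R (w1 - p)" unfolding w_def by (simp add: algebra_simps)
      thus ?thesis unfolding a_def by (simp add: inner_add_right)
    qed
    also have "\<dots> = 0" using that unfolding l_def by (simp add: field_simps)
    finally have "g w \<ge> c" using H unfolding a_def by simp
    moreover have "g w \<le> (1 - l) * g w2 + l * g w1"
      unfolding w_def using convex_onD[OF cvx l01] by simp
    ultimately have "(1 - l) * (g w2 - c) + l * (g w1 - c) \<ge> 0" by (simp add: algebra_simps)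
    hence "(a w2 - a w1) * ((1 - l) * (g w2 - c) + l * (g w1 - c)) \<ge> 0"
      using that by simp
    moreover have "(a w2 - a w1) * ((1 - l) * (g w2 - c) + l * (g w1 - c))
        = a w2 * (g w1 - c) - a w1 * (g w2 - c)"
    proof -
      have ne: "a w2 - a w1 \<noteq> 0" using that by simp
      have e1: "(a w2 - a w1) * (1 - l) = - a w1" using ne unfolding l_def by (simp add: field_simps)
      have e2: "(a w2 - a w1) * l = a w2" using ne unfolding l_def by simp
      have "(a w2 - a w1) * ((1 - l) * (g w2 - c) + l * (g w1 - c))
          = ((a w2 - a w1) * (1 - l)) * (g w2 - c) + ((a w2 - a w1) * l) * (g w1 - c)"
        by (simp add: algebra_simps)
      also have "\<dots> = a w2 * (g w1 - c) - a w1 * (g w2 - c)" unfolding e1 e2 by simp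
      finally show ?thesis .
    qed
    ultimately show ?thesis using key_ratio[OF that] by simp
  qed
  have Sne: "S \<noteq> {}" using axpos S_def by auto
  have Sbdd: "bdd_below S" unfolding S_def bdd_below_def using K[OF a0] by blast
  have mu_lo: "\<mu> \<ge> (g w1 - c) / a w1" if "a w1 < 0" for w1
    unfolding \<mu>_def using Sne by (rule cInf_greatest) (use K[OF that] S_def in blast)
  have mu_up: "\<mu> \<le> (g w2 - c) / a w2" if "a w2 > 0" for w2
  proof -
    have "(g w2 - c) / a w2 \<in> S" using that S_def by blast
    thus ?thesis unfolding \<mu>_def using Sbdd by (rule cInf_lower)
  qed
  have mupos: "\<mu> > 0"
  proof -
    have "(g w0 - c) / a w0 > 0" using a0 w0 by (simp add: divide_neg_neg)
    thus ?thesis using mu_lo[OF a0] by simp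
  qed
  have sub: "\<mu> *\<^sub>R d \<in> subdiff g p"
    unfolding subdiff_def
  proof (clarify)
    fix w
    have "\<mu> * a w \<le> g w - c"
    proof (cases "a w" "0::real" rule: linorder_cases)
      case less
      then show ?thesis using mu_lo[OF less] by (simp add: divide_le_eq mult.commute)
    next
      case equal
      then show ?thesis using H[of w] unfolding a_def by simp
    next
      case greater
      then show ?thesis using mu_up[OF greater] by (simp add: le_divide_eq mult.commute)
    qed
    thus "g p + inner (\<mu> *\<^sub>R d) (w - p) \<le> g w" using gp unfolding a_def by simp
  qed
  have "\<mu> * a x \<le> g x - c" using mu_up[OF axpos] axpos by (simp add: le_divide_eq mult.commute)
  moreover have "norm (\<mu> *\<^sub>R d) * norm (x - p) = \<mu> * a x"
    using mupos ax unfolding d_def by (simp add: power2_norm_eq_inner[symmetric] power2_eq_square)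
  ultimately show ?thesis using gp sub by (intro exI[of _ p] exI[of _ "\<mu> *\<^sub>R d"]) simp
qed


lemma convex_grad_ineq:
  fixes f :: "'a::euclidean_space \<Rightarrow> real"
  assumes cvx: "convex_on UNIV f" and der: "(f has_derivative (\<lambda>h. inner G h)) (at z)"
  shows "f w \<ge> f z + inner G (w - z)"
proof -
  define d where "d = w - z"
  define \<phi> where "\<phi> = (\<lambda>t::real. f (z + t *\<^sub>R d))"
  have cphi: "convex_on UNIV \<phi>"
  proof (rule convex_onI)
    fix t :: real and a b :: real
    assume t: "0 < t" "t < 1"
    have "z + ((1 - t) * a + t * b) *\<^sub>R d = (1 - t) *\<^sub>R (z + a *\<^sub>R d) + t *\<^sub>R (z + b *\<^sub>R d)"
      by (simp add: algebra_simps)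
    then show "\<phi> ((1 - t) *\<^sub>R a + t *\<^sub>R b) \<le> (1 - t) * \<phi> a + t * \<phi> b"
      unfolding \<phi>_def using convex_onD[OF cvx, of t "z + a *\<^sub>R d" "z + b *\<^sub>R d"] t by simp
  qed simp
  have d1: "((\<lambda>t::real. z + t *\<^sub>R d) has_derivative (\<lambda>t. t *\<^sub>R d)) (at 0)"
    by (auto intro!: derivative_eq_intros)
  have der0: "(f has_derivative (\<lambda>h. inner G h)) (at (z + 0 *\<^sub>R d))" using der by simp
  have "(\<phi> has_derivative (\<lambda>t. inner G (t *\<^sub>R d))) (at 0)"
    unfolding \<phi>_def using has_derivative_compose[OF d1 der0] by (simp add: o_def)
  moreover have "(\<lambda>t. inner G (t *\<^sub>R d)) = (*) (inner G d)" by (auto simp: fun_eq_iff)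
  ultimately have "(\<phi> has_field_derivative inner G d) (at 0)"
    unfolding has_field_derivative_def by simp
  hence "\<phi> 1 - \<phi> 0 \<ge> inner G d * (1 - 0)"
    using convex_on_imp_above_tangent[OF cphi connected_UNIV, of 0 1 "inner G d"] by simp
  thus ?thesis unfolding \<phi>_def d_def by simp
qed

lemma halfspace_proj_nonexp:
  fixes s :: "'a::euclidean_space"
  assumes "s \<noteq> 0"
  shows "norm ((w1 - (pos_part (k + inner s w1) / (norm s)\<^sup>2) *\<^sub>R s)
             - (w2 - (pos_part (k + inner s w2) / (norm s)\<^sup>2) *\<^sub>R s)) \<le> norm (w1 - w2)"
proof -
  define a1 where "a1 = k + inner s w1"
  define a2 where "a2 = k + inner s w2"
  define h1 where "h1 = pos_part a1"
  define h2 where "h2 = pos_part a2"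
  define N where "N = (norm s)\<^sup>2"
  have Npos: "N > 0" using assms N_def by simp
  define D where "D = w1 - w2"
  have sD: "inner s D = a1 - a2" unfolding D_def a1_def a2_def by (simp add: inner_diff_right)
  have mono: "(h1 - h2) * (a1 - a2) \<ge> (h1 - h2)\<^sup>2"
  proof (cases "a1 \<ge> 0"; cases "a2 \<ge> 0")
    assume "a1 \<ge> 0" "a2 \<ge> 0" thus ?thesis unfolding h1_def h2_def pos_part_def by (simp add: power2_eq_square)
  next
    assume "a1 \<ge> 0" "\<not> a2 \<ge> 0"
    hence "a1 * a1 \<le> a1 * (a1 - a2)" by (intro mult_left_mono) auto
    thus ?thesis using \<open>a1 \<ge> 0\<close> \<open>\<not> a2 \<ge> 0\<close> unfolding h1_def h2_def pos_part_def by (simp add: power2_eq_square)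
  next
    assume "\<not> a1 \<ge> 0" "a2 \<ge> 0"
    hence "a2 * a2 \<le> a2 * (a2 - a1)" by (intro mult_left_mono) auto
    thus ?thesis using \<open>\<not> a1 \<ge> 0\<close> \<open>a2 \<ge> 0\<close> unfolding h1_def h2_def pos_part_def by (simp add: power2_eq_square algebra_simps)
  next
    assume "\<not> a1 \<ge> 0" "\<not> a2 \<ge> 0" thus ?thesis unfolding h1_def h2_def pos_part_def by (simp add: power2_eq_square)
  qed
  have eq: "(w1 - (h1 / N) *\<^sub>R s) - (w2 - (h2 / N) *\<^sub>R s) = D - ((h1 - h2) / N) *\<^sub>R s"
    unfolding D_def by (simp add: algebra_simps diff_divide_distrib)
  have "(norm (D - ((h1 - h2) / N) *\<^sub>R s))\<^sup>2
      = (norm D)\<^sup>2 - 2 * ((h1 - h2) / N) * inner s D + ((h1 - h2) / N)\<^sup>2 * N"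
  proof -
    have gen: "(norm (D - c *\<^sub>R s))\<^sup>2 = (norm D)\<^sup>2 - 2 * c * inner s D + c\<^sup>2 * (norm s)\<^sup>2" for c
      unfolding power2_norm_eq_inner by (simp add: inner_diff_left inner_diff_right inner_commute
          algebra_simps power2_eq_square)
    show ?thesis unfolding N_def by (rule gen)
  qed
  also have "\<dots> = (norm D)\<^sup>2 - (2 * ((h1 - h2) * (a1 - a2)) - (h1 - h2)\<^sup>2) / N"
    using Npos unfolding sD by (simp add: field_simps power2_eq_square)
  also have "\<dots> \<le> (norm D)\<^sup>2"
  proof -
    have "2 * ((h1 - h2) * (a1 - a2)) - (h1 - h2)\<^sup>2 \<ge> 0" using mono
      by (smt (verit) zero_le_power2)
    thus ?thesis using Npos by simp
  qed
  finally have "norm (D - ((h1 - h2) / N) *\<^sub>R s) \<le> norm D"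
    using power2_le_imp_le by (metis norm_ge_zero)
  thus ?thesis unfolding a1_def[symmetric] a2_def[symmetric] h1_def[symmetric] h2_def[symmetric] N_def[symmetric] using eq D_def by metis
qed


theorem proposition2:
  fixes g :: "'a::euclidean_space \<Rightarrow> real"
    and f :: "nat \<Rightarrow> 'a \<Rightarrow> real"
    and gradf :: "nat \<Rightarrow> 'a \<Rightarrow> 'a"
    and x s :: "nat \<Rightarrow> 'a"
    and T :: nat
    and R Gg Gf \<sigma> \<epsilon> \<alpha> :: real
  assumes T_pos: "T \<ge> 1"
    and g_convex: "convex_on UNIV g"
    (* (A1) *)
    and R_pos: "R > 0"
    and A1: "{z. g z \<le> 0} \<subseteq> cball 0 R"
    (* (A2') *)
    and f_convex: "\<And>t. t \<in> {1..T} \<Longrightarrow> convex_on UNIV (f t)"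
    and f_grad: "\<And>t z. t \<in> {1..T} \<Longrightarrow> (f t has_derivative (\<lambda>h. inner (gradf t z) h)) (at z)"
    and Gf_pos: "Gf > 0"
    and A2: "\<And>t z. t \<in> {1..T} \<Longrightarrow> g z \<le> 0 \<Longrightarrow> norm (gradf t z) \<le> Gf"
    (* (A3) *)
    and Gg_pos: "Gg > 0"
    and A3: "\<And>z v. z \<in> cball 0 R \<Longrightarrow> v \<in> subdiff g z \<Longrightarrow> norm v \<le> Gg"
    (* (A4) *)
    and sigma_pos: "\<sigma> > 0" and eps_pos: "\<epsilon> > 0"
    and A4_ne: "{z. g z = - \<epsilon>} \<noteq> {}"
    and A4: "\<And>z v. g z = - \<epsilon> \<Longrightarrow> v \<in> subdiff g z \<Longrightarrow> norm v \<ge> \<sigma>"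
    (* initial point and parameters *)
    and alpha: "0 < \<alpha>" "\<alpha> \<le> \<epsilon>"
    and x1: "g (x 1) \<le> - \<alpha>"
    (* the algorithm, with rho = alpha / sqrt T and eta = xi rho / (Gf Gg) *)
    and s_sub: "\<And>t. t \<in> {1..T} \<Longrightarrow> s t \<in> subdiff g (x t)"
    and x_step: "\<And>t. t \<in> {1..T} \<Longrightarrow>
        x (Suc t) = ogd_polyak_step R
            ((1 - sqrt (1 - \<sigma>\<^sup>2 / Gg\<^sup>2)) * (\<alpha> / sqrt (real T)) / (Gf * Gg))
            (\<alpha> / sqrt (real T)) g (x t) (gradf t (x t)) (s t)"
  shows "regret T f x {z. g z \<le> 0} \<le>
           (2 * Gf * Gg * R\<^sup>2 / ((1 - sqrt (1 - \<sigma>\<^sup>2 / Gg\<^sup>2)) * \<alpha>)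
            + Gf * (1 - sqrt (1 - \<sigma>\<^sup>2 / Gg\<^sup>2)) * \<alpha> / (2 * Gg)
            + Gf * \<alpha> / \<sigma>) * sqrt (real T)
         \<and> (\<forall>t\<in>{1..T}. g (x t) \<le> 0)"
proof -
  define \<gamma> where "\<gamma> = 1 - \<sigma>\<^sup>2 / Gg\<^sup>2"
  define \<xi> where "\<xi> = 1 - sqrt \<gamma>"
  define sT where "sT = sqrt (real T)"
  define \<rho> where "\<rho> = \<alpha> / sT"
  define \<eta> where "\<eta> = \<xi> * \<rho> / (Gf * Gg)"
  define B where "B = cball (0::'a) R"
  have sT1: "sT \<ge> 1" using T_pos unfolding sT_def by simp
  have Tsq: "real T = sT * sT" unfolding sT_def by simp
  have rho_pos: "\<rho> > 0" using alpha sT1 unfolding \<rho>_def by simp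
  have rho_le: "\<rho> \<le> \<alpha>" using alpha sT1 unfolding \<rho>_def by (simp add: divide_le_eq mult_le_cancel_left1)
  have xs: "x (Suc t) = ogd_polyak_step R \<eta> \<rho> g (x t) (gradf t (x t)) (s t)" if "t \<in> {1..T}" for t
    using x_step[OF that] unfolding \<eta>_def \<xi>_def \<gamma>_def \<rho>_def sT_def by simp
  have cont: "continuous_on UNIV g" using convex_on_continuous[OF open_UNIV g_convex] .
  obtain z0 where z0: "g z0 = - \<epsilon>" using A4_ne by auto
  obtain w0 where w0: "g w0 < - \<epsilon>"
  proof (rule ccontr)
    assume "\<not> thesis"
    hence "\<forall>w. g w \<ge> - \<epsilon>" using that by (meson not_le)
    hence "0 \<in> subdiff g z0" unfolding subdiff_def using z0 by simp
    hence "\<sigma> \<le> 0" using A4[OF z0, of 0] by simp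
    thus False using sigma_pos by simp
  qed
  have sig_le: "\<sigma> \<le> Gg"
  proof -
    obtain b :: 'a where b: "b \<in> Basis" using nonempty_Basis by blast
    define xo where "xo = (R + 1) *\<^sub>R b"
    have "norm xo = R + 1" unfolding xo_def using b R_pos by simp
    hence "xo \<notin> cball 0 R" by simp
    hence "g xo > 0" using A1 by force
    then obtain p v where pv: "g p = - \<epsilon>" "v \<in> subdiff g p"
      using subgrad_exists_level[OF g_convex w0, of xo] eps_pos by auto
    have "p \<in> cball 0 R" using A1 pv eps_pos by force
    thus ?thesis using A3[OF _ pv(2)] A4[OF pv] by simp
  qed
  have gam: "0 \<le> \<gamma>" "\<gamma> < 1" unfolding \<gamma>_def using sig_le sigma_pos Gg_pos
    by (auto simp: field_simps power_mono)
  have sg: "0 \<le> sqrt \<gamma>" "sqrt \<gamma> < 1" using gam by auto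
  have xi: "0 < \<xi>" "\<xi> \<le> 1" unfolding \<xi>_def using sg by auto
  have eta_pos: "\<eta> > 0" unfolding \<eta>_def using xi rho_pos Gf_pos Gg_pos by simp
  have etaGf: "\<eta> * Gf = \<xi> * \<rho> / Gg" unfolding \<eta>_def using Gf_pos by simp
  have sharp: "\<exists>k. g k \<le> - \<rho> \<and> \<sigma> * norm (y - k) \<le> max (g y + \<rho>) 0" for y
  proof (cases "g y \<le> - \<rho>")
    case True
    then show ?thesis by (intro exI[of _ y]) simp
  next
    case False
    hence gy: "g y > - \<rho>" by simp
    have gye: "g y > - \<epsilon>" using gy rho_le alpha by simp
    obtain p v where pv: "g p = - \<epsilon>" "v \<in> subdiff g p" "g y \<ge> - \<epsilon> + norm v * norm (y - p)"
      using subgrad_exists_level[OF g_convex w0 gye] by blast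
    have "\<sigma> * norm (y - p) \<le> norm v * norm (y - p)"
      using A4[OF pv(1,2)] by (simp add: mult_right_mono)
    hence sp: "\<sigma> * norm (y - p) \<le> g y + \<epsilon>" using pv(3) by simp
    define l where "l = (g y + \<rho>) / (g y + \<epsilon>)"
    have l01: "0 \<le> l" "l \<le> 1" unfolding l_def using gy gye rho_le alpha by auto
    define k where "k = (1 - l) *\<^sub>R y + l *\<^sub>R p"
    have "g k \<le> (1 - l) * g y + l * g p" unfolding k_def using convex_onD[OF g_convex l01] by simp
    also have "\<dots> = g y - l * (g y + \<epsilon>)" using pv(1) by (simp add: algebra_simps)
    also have "\<dots> = - \<rho>" unfolding l_def using gye by simp
    finally have gk: "g k \<le> - \<rho>" .
    have "y - k = l *\<^sub>R (y - p)" unfolding k_def by (simp add: algebra_simps)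
    hence "\<sigma> * norm (y - k) = l * (\<sigma> * norm (y - p))" using l01 by simp
    also have "\<dots> \<le> l * (g y + \<epsilon>)" using sp l01 by (simp add: mult_left_mono)
    also have "\<dots> = g y + \<rho>" unfolding l_def using gye by simp
    finally show ?thesis using gk by (intro exI[of _ k]) simp
  qed
  define K where "K = {w. g w \<le> - \<rho>}"
  have clK: "closed K" unfolding K_def
    using closed_Collect_le[OF cont continuous_on_const] by simp
  have cvK: "convex K" unfolding K_def using sublevel_convex[OF g_convex] .
  have x1K: "x 1 \<in> K" unfolding K_def using x1 rho_le by simp
  have neK: "K \<noteq> {}" using x1K by auto
  have KB: "K \<subseteq> B" unfolding K_def B_def using A1 rho_pos by force
  have clB: "closed B" "convex B" "B \<noteq> {}" unfolding B_def using R_pos by auto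
  define y where "y t = x t - \<eta> *\<^sub>R gradf t (x t)" for t
  define z where "z t = (if s t \<noteq> 0 then y t - (pos_part (g (x t) + inner (s t) (y t - x t) + \<rho>) / (norm (s t))\<^sup>2) *\<^sub>R s t else y t)" for t
  have xz: "x (Suc t) = closest_point B (z t)" if "t \<in> {1..T}" for t
    using xs[OF that] unfolding ogd_polyak_step_def Let_def z_def y_def B_def by simp
  have PB: "norm (x (Suc t) - w) \<le> norm (z t - w)" if "t \<in> {1..T}" "w \<in> B" for t w
    using closest_point_lipschitz[OF clB(2,1,3), of "z t" w] closest_point_self[OF that(2)] xz[OF that(1)]
    by (simp add: dist_norm)
  have xB: "x (Suc t) \<in> B" if "t \<in> {1..T}" for t
    using xz[OF that] closest_point_in_set[OF clB(1,3)] by simp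
  define Pm where "Pm t w = w - (pos_part (g (x t) + inner (s t) (w - x t) + \<rho>) / (norm (s t))\<^sup>2) *\<^sub>R s t" for t w
  have Pm_ne: "norm (Pm t w1 - Pm t w2) \<le> norm (w1 - w2)" if "s t \<noteq> 0" for t w1 w2
  proof -
    have e: "g (x t) + inner (s t) (w - x t) + \<rho> = (g (x t) - inner (s t) (x t) + \<rho>) + inner (s t) w" for w
      by (simp add: inner_diff_right)
    show ?thesis unfolding Pm_def e using halfspace_proj_nonexp[OF that] by blast
  qed
  have zPm: "s t \<noteq> 0 \<Longrightarrow> z t = Pm t (y t)" for t unfolding z_def Pm_def by simp
  have PH: "norm (z t - w) \<le> norm (y t - w)" if "t \<in> {1..T}" "g w \<le> - \<rho>" for t w
  proof (cases "s t = 0")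
    case True thus ?thesis unfolding z_def by simp
  next
    case False
    have "g (x t) + inner (s t) (w - x t) \<le> g w" using s_sub[OF that(1)] unfolding subdiff_def by simp
    hence "Pm t w = w" unfolding Pm_def pos_part_def using that(2) by simp
    thus ?thesis using Pm_ne[OF False, of "y t" w] zPm[OF False] by simp
  qed
  define Inv where "Inv t \<longleftrightarrow> x t \<in> B \<and> (\<exists>q. g q \<le> - \<rho> \<and> norm (x t - q) \<le> \<rho> / Gg)" for t
  have feas: "g (x t) \<le> 0" if fT: "t \<in> {1..T}" and fI: "Inv t" for t
  proof -
    obtain q where q: "g q \<le> - \<rho>" "norm (x t - q) \<le> \<rho> / Gg" using fI Inv_def by blast
    have st: "norm (s t) \<le> Gg" using A3[OF _ s_sub[OF fT]] fI Inv_def B_def by blast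
    have "g (x t) + inner (s t) (q - x t) \<le> g q" using s_sub[OF fT] unfolding subdiff_def by simp
    moreover have "- inner (s t) (q - x t) \<le> norm (s t) * norm (x t - q)"
      using norm_cauchy_schwarz[of "s t" "x t - q"] by (simp add: inner_diff_right)
    moreover have "norm (s t) * norm (x t - q) \<le> Gg * (\<rho> / Gg)"
      using st q(2) Gg_pos by (intro mult_mono) auto
    ultimately show ?thesis using q(1) Gg_pos by simp
  qed
  have step: "Inv (Suc t)" if tT: "t \<in> {1..T}" and It: "Inv t" for t
  proof -
    have xtB: "x t \<in> B" using It Inv_def by simp
    have gradb: "norm (gradf t (x t)) \<le> Gf" using A2[OF tT feas[OF tT It]] .
    have yx: "norm (y t - x t) \<le> \<eta> * Gf" unfolding y_def using gradb eta_pos by simp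
    obtain q where q: "g q \<le> - \<rho>" "norm (x t - q) \<le> \<rho> / Gg" using It Inv_def by blast
    define q0 where "q0 = closest_point K (x t)"
    have q0K: "q0 \<in> K" unfolding q0_def using closest_point_in_set[OF clK neK] .
    define D where "D = norm (x t - q0)"
    have Dle: "D \<le> norm (x t - w)" if "w \<in> K" for w
      using closest_point_le[OF clK that, of "x t"] unfolding D_def q0_def by (simp add: dist_norm)
    have Dr: "D \<le> \<rho> / Gg" using Dle[of q] q K_def by force
    have D0: "D \<ge> 0" unfolding D_def by simp
    define h where "h = pos_part (g (x t) + \<rho>)"
    have sD: "\<sigma> * D \<le> h"
    proof -
      obtain k where k: "g k \<le> - \<rho>" "\<sigma> * norm (x t - k) \<le> max (g (x t) + \<rho>) 0" using sharp by blast
      have "\<sigma> * D \<le> \<sigma> * norm (x t - k)" using Dle[of k] k K_def sigma_pos by simp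
      thus ?thesis using k unfolding h_def pos_part_def by simp
    qed
    have zq: "norm (z t - q0) \<le> \<rho> / Gg"
    proof (cases "s t = 0")
      case True
      hence "g (x t) \<le> g q0" using s_sub[OF tT] unfolding subdiff_def by simp
      hence "x t \<in> K" using q0K K_def by simp
      hence "q0 = x t" unfolding q0_def by (rule closest_point_self)
      hence "norm (z t - q0) \<le> \<eta> * Gf" using yx True unfolding z_def by simp
      also have "\<dots> \<le> \<rho> / Gg" using etaGf xi rho_pos Gg_pos by (simp add: divide_right_mono)
      finally show ?thesis .
    next
      case False
      define N where "N = (norm (s t))\<^sup>2"
      have Npos: "N > 0" using False N_def by simp
      have NG: "N \<le> Gg\<^sup>2" using A3[OF xtB[unfolded B_def] s_sub[OF tT]] unfolding N_def by (simp add: power_mono)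
      define c where "c = h / N"
      have c0: "c \<ge> 0" unfolding c_def h_def pos_part_def using Npos by simp
      have zp: "Pm t (x t) = x t - c *\<^sub>R s t" unfolding Pm_def c_def h_def N_def by simp
      have isub: "inner (s t) (x t - q0) \<ge> g (x t) + \<rho>"
      proof -
        have "g (x t) + inner (s t) (q0 - x t) \<le> g q0" using s_sub[OF tT] unfolding subdiff_def by simp
        moreover have "inner (s t) (q0 - x t) = - inner (s t) (x t - q0)" by (simp add: inner_diff_right)
        ultimately show ?thesis using q0K K_def by simp
      qed
      have ch: "c * inner (s t) (x t - q0) \<ge> c * h"
      proof (cases "g (x t) + \<rho> \<ge> 0")
        case True thus ?thesis using isub c0 unfolding h_def pos_part_def by (simp add: mult_left_mono)
      next
        case False thus ?thesis unfolding c_def h_def pos_part_def by simp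
      qed
      have "(norm (Pm t (x t) - q0))\<^sup>2 = (norm ((x t - q0) - c *\<^sub>R s t))\<^sup>2" unfolding zp by (simp add: algebra_simps)
      also have "\<dots> = D\<^sup>2 - 2 * c * inner (s t) (x t - q0) + c\<^sup>2 * N"
        unfolding D_def N_def power2_norm_eq_inner
        by (simp add: inner_diff_left inner_diff_right inner_commute algebra_simps power2_eq_square)
      also have "\<dots> \<le> D\<^sup>2 - 2 * c * h + c\<^sup>2 * N" using ch by simp
      also have "\<dots> = D\<^sup>2 - h\<^sup>2 / N" unfolding c_def using Npos by (simp add: field_simps power2_eq_square)
      also have "\<dots> \<le> D\<^sup>2 - (\<sigma> * D)\<^sup>2 / Gg\<^sup>2"
      proof -
        have "(\<sigma> * D)\<^sup>2 \<le> h\<^sup>2" using sD sigma_pos D0 by (intro power_mono) auto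
        hence "(\<sigma> * D)\<^sup>2 / Gg\<^sup>2 \<le> h\<^sup>2 / Gg\<^sup>2" using Gg_pos by (simp add: divide_right_mono)
        also have "\<dots> \<le> h\<^sup>2 / N" using NG Npos Gg_pos by (intro divide_left_mono) auto
        finally show ?thesis by simp
      qed
      also have "\<dots> = \<gamma> * D\<^sup>2" unfolding \<gamma>_def using Gg_pos by (simp add: field_simps power_mult_distrib)
      finally have "(norm (Pm t (x t) - q0))\<^sup>2 \<le> \<gamma> * D\<^sup>2" .
      hence "norm (Pm t (x t) - q0) \<le> sqrt (\<gamma> * D\<^sup>2)" using real_le_rsqrt by blast
      also have "\<dots> = sqrt \<gamma> * D" using D0 by (simp add: real_sqrt_mult)
      finally have pq: "norm (Pm t (x t) - q0) \<le> sqrt \<gamma> * D" .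
      have "norm (z t - q0) \<le> norm (z t - Pm t (x t)) + norm (Pm t (x t) - q0)"
        by (metis norm_triangle_ineq diff_add_cancel add.commute add_diff_eq)
      also have "\<dots> \<le> \<eta> * Gf + sqrt \<gamma> * D"
        using Pm_ne[OF False, of "y t" "x t"] zPm[OF False] yx pq by simp
      also have "\<dots> \<le> \<xi> * \<rho> / Gg + sqrt \<gamma> * (\<rho> / Gg)"
        using etaGf mult_left_mono[OF Dr sg(1)] by simp
      also have "\<dots> = \<rho> / Gg" unfolding \<xi>_def using Gg_pos by (simp add: field_simps)
      finally show ?thesis .
    qed
    have "norm (x (Suc t) - q0) \<le> \<rho> / Gg" using PB[OF tT, of q0] q0K KB zq by auto
    thus ?thesis unfolding Inv_def using xB[OF tT] q0K K_def by auto
  qed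
  have inv: "Inv t" if "t \<in> {1..T}" for t
    using that
  proof (induction t)
    case 0 thus ?case by simp
  next
    case (Suc t)
    show ?case
    proof (cases "t = 0")
      case True
      thus ?thesis unfolding Inv_def using x1K KB rho_pos Gg_pos by (intro conjI exI[of _ "x 1"]) (auto simp: K_def)
    next
      case False
      hence "t \<in> {1..T}" using Suc.prems by simp
      thus ?thesis using step Suc.IH by blast
    qed
  qed
  have feasT: "\<forall>t\<in>{1..T}. g (x t) \<le> 0" using feas inv by blast
  define Btot where "Btot = 2 * R\<^sup>2 / \<eta> + real T * (\<eta> * Gf\<^sup>2 / 2) + real T * (Gf * \<rho> / \<sigma>)"
  have per_u: "(\<Sum>t=1..T. f t (x t)) - Btot \<le> (\<Sum>t=1..T. f t u)" if gu: "g u \<le> 0" for u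
  proof -
    obtain u' where u': "g u' \<le> - \<rho>" "\<sigma> * norm (u - u') \<le> max (g u + \<rho>) 0" using sharp by blast
    have uu: "norm (u - u') \<le> \<rho> / \<sigma>" using u' gu rho_pos sigma_pos by (simp add: field_simps)
    have u'B: "u' \<in> B" using u' KB K_def by auto
    define a where "a t = (norm (x t - u'))\<^sup>2" for t
    have each: "f t (x t) - f t u \<le> (a t - a (Suc t)) / (2 * \<eta>) + \<eta> * Gf\<^sup>2 / 2 + Gf * \<rho> / \<sigma>"
      if tT: "t \<in> {1..T}" for t
    proof -
      define G where "G = gradf t (x t)"
      have GG: "norm G \<le> Gf" unfolding G_def using A2[OF tT feasT[rule_format, OF tT]] .
      have i1: "f t u' \<ge> f t (x t) + inner G (u' - x t)"
        unfolding G_def using convex_grad_ineq[OF f_convex[OF tT] f_grad[OF tT]] .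
      have i2: "f t u \<ge> f t u' + inner (gradf t u') (u - u')"
        using convex_grad_ineq[OF f_convex[OF tT] f_grad[OF tT]] .
      have gu'b: "norm (gradf t u') \<le> Gf" using A2[OF tT] u' rho_pos by simp
      have "- inner (gradf t u') (u - u') \<le> norm (gradf t u') * norm (u - u')"
        using norm_cauchy_schwarz[of "gradf t u'" "u' - u"] by (simp add: inner_diff_right norm_minus_commute)
      also have "\<dots> \<le> Gf * (\<rho> / \<sigma>)" using gu'b uu Gf_pos by (intro mult_mono) auto
      finally have i3: "f t u' - f t u \<le> Gf * \<rho> / \<sigma>" using i2 by simp
      have "norm (x (Suc t) - u') \<le> norm (y t - u')"
        using PB[OF tT u'B] PH[OF tT u'(1)] by simp
      hence "a (Suc t) \<le> (norm (y t - u'))\<^sup>2" unfolding a_def by (simp add: power_mono)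
      also have "(norm (y t - u'))\<^sup>2 = a t - 2 * \<eta> * inner G (x t - u') + \<eta>\<^sup>2 * (norm G)\<^sup>2"
      proof -
        have e: "y t - u' = (x t - u') - \<eta> *\<^sub>R G" unfolding y_def G_def by simp
        show ?thesis unfolding a_def e power2_norm_eq_inner
          by (simp add: inner_diff_left inner_diff_right inner_commute algebra_simps power2_eq_square)
      qed
      also have "\<dots> \<le> a t - 2 * \<eta> * inner G (x t - u') + \<eta>\<^sup>2 * Gf\<^sup>2"
        using GG by (simp add: power_mono mult_left_mono)
      finally have "2 * \<eta> * inner G (x t - u') \<le> a t - a (Suc t) + \<eta>\<^sup>2 * Gf\<^sup>2" by simp
      hence "inner G (x t - u') \<le> (a t - a (Suc t) + \<eta>\<^sup>2 * Gf\<^sup>2) / (2 * \<eta>)"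
        using eta_pos by (simp add: field_simps)
      also have "\<dots> = (a t - a (Suc t)) / (2 * \<eta>) + \<eta> * Gf\<^sup>2 / 2"
        using eta_pos by (simp add: field_simps power2_eq_square)
      finally have i4: "inner G (x t - u') \<le> (a t - a (Suc t)) / (2 * \<eta>) + \<eta> * Gf\<^sup>2 / 2" .
      have "inner G (u' - x t) = - inner G (x t - u')" by (simp add: inner_diff_right)
      thus ?thesis using i1 i3 i4 by simp
    qed
    have "(\<Sum>t=1..T. f t (x t) - f t u) \<le> (\<Sum>t=1..T. (a t - a (Suc t)) / (2 * \<eta>) + (\<eta> * Gf\<^sup>2 / 2 + Gf * \<rho> / \<sigma>))"
      using each by (intro sum_mono) (simp add: add.assoc)
    also have "\<dots> = (\<Sum>t=1..T. a t - a (Suc t)) / (2 * \<eta>) + real T * (\<eta> * Gf\<^sup>2 / 2 + Gf * \<rho> / \<sigma>)"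
      by (simp add: sum.distrib sum_divide_distrib)
    also have "(\<Sum>t=1..T. a t - a (Suc t)) = a 1 - a (Suc T)"
      using sum_Suc_diff[of 1 T "\<lambda>t. - a t"] T_pos by simp
    also have "a 1 - a (Suc T) \<le> 4 * R\<^sup>2"
    proof -
      have "x 1 \<in> B" using inv[of 1] T_pos Inv_def by simp
      hence "norm (x 1 - u') \<le> 2 * R" using u'B unfolding B_def
        by (smt (verit) mem_cball_0 norm_triangle_ineq4)
      hence "a 1 \<le> (2 * R)\<^sup>2" unfolding a_def by (intro power_mono) auto
      moreover have "a (Suc T) \<ge> 0" unfolding a_def by simp
      ultimately show ?thesis by (simp add: power_mult_distrib)
    qed
    finally have "(\<Sum>t=1..T. f t (x t) - f t u) \<le> 4 * R\<^sup>2 / (2 * \<eta>) + real T * (\<eta> * Gf\<^sup>2 / 2 + Gf * \<rho> / \<sigma>)"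
      using eta_pos by (simp add: divide_right_mono)
    also have "\<dots> = Btot" unfolding Btot_def by (simp add: algebra_simps)
    finally show ?thesis by (simp add: sum_subtractf)
  qed
  have Xne: "{z. g z \<le> 0} \<noteq> {}" using x1 alpha by (auto intro!: exI[of _ "x 1"])
  have "(\<Sum>t=1..T. f t (x t)) - Btot \<le> (INF u\<in>{z. g z \<le> 0}. \<Sum>t=1..T. f t u)"
    by (rule cINF_greatest[OF Xne]) (use per_u in blast)
  hence reg: "regret T f x {z. g z \<le> 0} \<le> Btot" unfolding regret_def by simp
  have "Btot = (2 * Gf * Gg * R\<^sup>2 / ((1 - sqrt (1 - \<sigma>\<^sup>2 / Gg\<^sup>2)) * \<alpha>)
            + Gf * (1 - sqrt (1 - \<sigma>\<^sup>2 / Gg\<^sup>2)) * \<alpha> / (2 * Gg)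
            + Gf * \<alpha> / \<sigma>) * sqrt (real T)"
  proof -
    have "Btot = (2 * Gf * Gg * R\<^sup>2 / (\<xi> * \<alpha>) + Gf * \<xi> * \<alpha> / (2 * Gg) + Gf * \<alpha> / \<sigma>) * sT"
      unfolding Btot_def \<eta>_def \<rho>_def Tsq using xi alpha sT1 Gf_pos Gg_pos sigma_pos
      by (simp add: field_simps power2_eq_square)
    thus ?thesis unfolding \<xi>_def \<gamma>_def sT_def .
  qed
  thus ?thesis using reg feasT by simp
qed
end
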